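(* Let $f \in \mathrm{Inj}(\Omega)$ and $h \in \mathrm{Fin}(\Omega)$. Then $(f)\mathrm{C}_{\mathrm{open}} = (hf)\mathrm{C}_{\mathrm{open}}$ and $(f)\mathrm{C}_{\mathrm{open}} = (fh)\mathrm{C}_{\mathrm{open}}$.
   Context: $\Omega$ is a countably infinite set; maps are written on the right and composed left to right ($(\alpha)fg=((\alpha)f)g$). $\mathrm{Inj}(\Omega)$ is the monoid of injective maps $\Omega\to\Omega$; $\mathrm{Fin}(\Omega)$ the group of permutations of $\Omega$ moving only finitely many points. For $f\in\mathrm{Inj}(\Omega)$, a cycle of $f$ is a nonempty $\Sigma\subseteq\Omega$ such that (a) for all $\alpha\in\Omega$, $(\alpha)f\in\Sigma$ iff $\alpha\in\Sigma$, and (b) no proper nonempty subset of $\Sigma$ satisfies (a). A forward cycle is an infinite cycle $\Sigma$ with $\Sigma\setminus(\Omega)f\ne\emptyset$; an open cycle is an infinite cycle that is not forward. $(f)\mathrm{C}_{\mathrm{open}}$ is the number of open cycles of $f$. *)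

theory Defs
  imports Main "HOL-Library.Countable" "HOL-Library.Extended_Nat"
begin

text \<open>Maps are written on the right in the paper; in Isabelle a map is an ordinary
function, and the paper's product hf (first h, then f) is the composition f \<circ> h.\<close>

definition is_cycle :: "('a \<Rightarrow> 'a) \<Rightarrow> 'a set \<Rightarrow> bool" where
  "is_cycle f S \<longleftrightarrow> S \<noteq> {} \<and> (\<forall>x. f x \<in> S \<longleftrightarrow> x \<in> S) \<and>
     \<not> (\<exists>T. T \<noteq> {} \<and> T \<subset> S \<and> (\<forall>x. f x \<in> T \<longleftrightarrow> x \<in> T))"

definition is_forward_cycle :: "('a \<Rightarrow> 'a) \<Rightarrow> 'a set \<Rightarrow> bool" where
  "is_forward_cycle f S \<longleftrightarrow> is_cycle f S \<and> infinite S \<and> S - range f \<noteq> {}"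

definition is_open_cycle :: "('a \<Rightarrow> 'a) \<Rightarrow> 'a set \<Rightarrow> bool" where
  "is_open_cycle f S \<longleftrightarrow> is_cycle f S \<and> infinite S \<and> \<not> is_forward_cycle f S"

text \<open>Number of open cycles, as an element of enat (there are at most countably many,
since cycles are pairwise disjoint subsets of a countable set).\<close>
definition C_open :: "('a \<Rightarrow> 'a) \<Rightarrow> enat" where
  "C_open f = (if finite {S. is_open_cycle f S} then enat (card {S. is_open_cycle f S}) else \<infinity>)"

definition finitary_perm :: "('a \<Rightarrow> 'a) \<Rightarrow> bool" where
  "finitary_perm h \<longleftrightarrow> bij h \<and> finite {x. h x \<noteq> x}"

end

theory Submission
  imports Defs
begin

definition orb :: "('a \<Rightarrow> 'a) \<Rightarrow> 'a \<Rightarrow> 'a set" where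
  "orb f x = {y. \<exists>m n. (f^^m) x = (f^^n) y}"

definition chain :: "('a \<Rightarrow> 'a) \<Rightarrow> (nat \<Rightarrow> 'a) \<Rightarrow> bool" where
  "chain f s \<longleftrightarrow> (\<forall>k. f (s (Suc k)) = s k)"

lemma orb_closed: "f y \<in> orb f x \<longleftrightarrow> y \<in> orb f x"
proof
  assume "f y \<in> orb f x"
  then obtain m n where "(f^^m) x = (f^^n) (f y)" unfolding orb_def by blast
  then have "(f^^m) x = (f^^(Suc n)) y" by (simp only: funpow_Suc_right comp_apply)
  then show "y \<in> orb f x" unfolding orb_def mem_Collect_eq by (intro exI)
next
  assume "y \<in> orb f x"
  then obtain m n where "(f^^m) x = (f^^n) y" unfolding orb_def by blast
  then have "(f^^(Suc m)) x = (f^^n) (f y)" by (simp only: funpow.simps comp_apply funpow_swap1)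
  then show "f y \<in> orb f x" unfolding orb_def mem_Collect_eq by (intro exI)
qed
lemma closed_funpow:
  assumes "\<forall>z. f z \<in> T \<longleftrightarrow> z \<in> T"
  shows "(f^^n) z \<in> T \<longleftrightarrow> z \<in> T"
  using assms by (induction n) auto

lemma orb_sub:
  assumes "\<forall>z. f z \<in> T \<longleftrightarrow> z \<in> T" "x \<in> T"
  shows "orb f x \<subseteq> T"
proof
  fix y assume "y \<in> orb f x"
  then obtain m n where e: "(f^^m) x = (f^^n) y" by (auto simp: orb_def)
  have "(f^^m) x \<in> T" using closed_funpow[OF assms(1)] assms(2) by blast
  then have "(f^^n) y \<in> T" using e by simp
  then show "y \<in> T" using closed_funpow[OF assms(1)] by blast
qed

lemma orb_sym1: "y \<in> orb f x \<Longrightarrow> x \<in> orb f y"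
proof -
  assume "y \<in> orb f x"
  then obtain m n where e: "(f^^m) x = (f^^n) y" unfolding orb_def by blast
  show "x \<in> orb f y" unfolding orb_def mem_Collect_eq
    by (rule exI[of _ n], rule exI[of _ m], rule sym, rule e)
qed
lemma orb_sym: "y \<in> orb f x \<longleftrightarrow> x \<in> orb f y"
  by (rule iffI) (erule orb_sym1)+

lemma orb_self: "x \<in> orb f x"
  unfolding orb_def mem_Collect_eq by (rule exI[of _ 0], rule exI[of _ 0], rule refl)

lemma orb_closed_all: "\<forall>z. f z \<in> orb f x \<longleftrightarrow> z \<in> orb f x"
  by (intro allI) (rule orb_closed)

lemma is_cycle_orb: "is_cycle f (orb f x)"
  unfolding is_cycle_def
proof (intro conjI)
  show "orb f x \<noteq> {}" using orb_self[of x f] by auto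
  show "\<forall>z. f z \<in> orb f x \<longleftrightarrow> z \<in> orb f x" by (rule orb_closed_all)
  show "\<not> (\<exists>T. T \<noteq> {} \<and> T \<subset> orb f x \<and> (\<forall>z. f z \<in> T \<longleftrightarrow> z \<in> T))"
  proof
    assume "\<exists>T. T \<noteq> {} \<and> T \<subset> orb f x \<and> (\<forall>z. f z \<in> T \<longleftrightarrow> z \<in> T)"
    then obtain T y where T: "y \<in> T" "T \<subset> orb f x" "\<forall>z. f z \<in> T \<longleftrightarrow> z \<in> T" by blast
    have "y \<in> orb f x" using T(2,1) by (rule psubsetD)
    then have "x \<in> orb f y" by (rule orb_sym1)
    then have "x \<in> T" using orb_sub[OF T(3) T(1)] by (rule subsetD[rotated])
    then have "orb f x \<subseteq> T" by (rule orb_sub[OF T(3)])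
    then show False using T(2) by (simp add: psubset_eq)
  qed
qed

lemma cycle_eq:
  assumes "is_cycle f S" "x \<in> S"
  shows "S = orb f x"
proof -
  have cl: "\<forall>z. f z \<in> S \<longleftrightarrow> z \<in> S" using assms(1) by (simp add: is_cycle_def)
  have sub: "orb f x \<subseteq> S" using orb_sub[OF cl assms(2)] .
  show ?thesis
  proof (rule ccontr)
    assume "S \<noteq> orb f x"
    then have "orb f x \<subset> S" using sub by blast
    then show False using assms(1) orb_self[of x f] orb_closed_all[of f x]
      unfolding is_cycle_def by blast
  qed
qed

lemma orb_eq:
  assumes "y \<in> orb f x" shows "orb f y = orb f x"
  using cycle_eq[OF is_cycle_orb assms] by simp

lemma open_iff: "is_open_cycle f S \<longleftrightarrow> is_cycle f S \<and> infinite S \<and> S \<subseteq> range f"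
  unfolding is_open_cycle_def is_forward_cycle_def by blast

lemma chain_pow: "chain f s \<Longrightarrow> (f^^a) (s (a+b)) = s b"
proof (induction a)
  case 0 then show ?case by simp
next
  case (Suc a)
  have "(f^^Suc a) (s (Suc a + b)) = (f^^a) (f (s (Suc (a + b))))"
    by (metis funpow_Suc_right comp_apply add_Suc)
  also have "\<dots> = (f^^a) (s (a+b))" using Suc.prems by (simp add: chain_def)
  finally show ?case using Suc by simp
qed

lemma chain_in_orb: "chain f s \<Longrightarrow> s k \<in> orb f (s 0)"
  unfolding orb_def using chain_pow[of f s k 0]
  by (metis (mono_tags, lifting) add.right_neutral funpow_0 mem_Collect_eq)

lemma meet:
  assumes "inj g" "chain g s" "chain g s'" "s' 0 \<in> orb g (s 0)"
  shows "\<exists>i j. s i = s' j"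
proof -
  obtain m n where e: "(g^^m) (s 0) = (g^^n) (s' 0)" using assms(4) by (auto simp: orb_def)
  have a: "s 0 = (g^^m) (s m)" using chain_pow[OF assms(2), of m 0] by simp
  have b: "s' 0 = (g^^n) (s' n)" using chain_pow[OF assms(3), of n 0] by simp
  have "(g^^(m+m)) (s m) = (g^^(n+n)) (s' n)" using e a b by (simp add: funpow_add)
  have "(g^^(m+n)) (s n) = (g^^(m+n)) (s' m)"
  proof -
    have "(g^^(m+n)) (s n) = (g^^m) ((g^^n) (s n))" by (simp add: funpow_add)
    also have "(g^^n) (s n) = s 0" using chain_pow[OF assms(2), of n 0] by simp
    also have "(g^^m) (s 0) = (g^^n) (s' 0)" by (rule e)
    also have "s' 0 = (g^^m) (s' m)" using chain_pow[OF assms(3), of m 0] by simp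
    also have "(g^^n) ((g^^m) (s' m)) = (g^^(m+n)) (s' m)" by (metis funpow_add add.commute comp_apply)
    finally show ?thesis .
  qed
  then have "s n = s' m" using inj_fn[OF assms(1), of "m+n"] by (simp add: inj_def)
  then show ?thesis by blast
qed

lemma B_open:
  assumes "inj g" "chain g s" "inj s"
  shows "is_open_cycle g (orb g (s 0))"
  unfolding open_iff
proof (intro conjI)
  show "is_cycle g (orb g (s 0))" by (rule is_cycle_orb)
  have "range s \<subseteq> orb g (s 0)" using chain_in_orb[OF assms(2)] by blast
  moreover have "infinite (range s)" using assms(3) by (simp add: range_inj_infinite)
  ultimately show "infinite (orb g (s 0))" using finite_subset by blast
  show "orb g (s 0) \<subseteq> range g"
  proof
    fix y assume "y \<in> orb g (s 0)"
    then obtain m n where e: "(g^^m) (s 0) = (g^^n) y" by (auto simp: orb_def)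
    have "s 0 = (g^^(Suc n)) (s (Suc n))" using chain_pow[OF assms(2), of "Suc n" 0] by simp
    have "(g^^n) ((g^^(Suc m)) (s (Suc n))) = (g^^(n + Suc m)) (s (Suc n))"
      by (simp only: funpow_add o_apply)
    also have "n + Suc m = m + Suc n" by simp
    also have "(g^^(m + Suc n)) (s (Suc n)) = (g^^m) ((g^^(Suc n)) (s (Suc n)))"
      by (simp only: funpow_add o_apply)
    also have "\<dots> = (g^^n) y" using e \<open>s 0 = (g^^(Suc n)) (s (Suc n))\<close> by simp
    finally have "(g^^n) ((g^^(Suc m)) (s (Suc n))) = (g^^n) y" .
    then have "(g^^(Suc m)) (s (Suc n)) = y" using inj_fn[OF assms(1), of n] by (simp add: inj_def)
    then show "y \<in> range g" by (metis funpow.simps(2) o_apply rangeI)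
  qed
qed

lemma periodic_finite:
  assumes "inj f" "(f^^p) x = x" "p > 0"
  shows "finite (orb f x)"
proof -
  have pm: "(f^^(p*q)) x = x" for q
  proof (induction q)
    case 0 then show ?case by simp
  next
    case (Suc q)
    have "(f^^(p*Suc q)) x = (f^^p) ((f^^(p*q)) x)" by (simp add: funpow_add)
    then show ?case using Suc assms(2) by simp
  qed
  have md: "(f^^k) x = (f^^(k mod p)) x" for k
  proof -
    have "(f^^k) x = (f^^(k mod p + p*(k div p))) x" by simp
    also have "\<dots> = (f^^(k mod p)) ((f^^(p*(k div p))) x)" by (simp only: funpow_add o_apply)
    finally show ?thesis using pm by simp
  qed
  have "orb f x \<subseteq> (\<lambda>k. (f^^k) x) ` {..<p}"
  proof
    fix y assume "y \<in> orb f x"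
    then obtain m n where e: "(f^^m) x = (f^^n) y" by (auto simp: orb_def)
    have "(f^^n) ((f^^(m + p*n - n)) x) = (f^^(m+p*n)) x"
    proof -
      have "n \<le> p*n" using assms(3) by simp
      then have "n \<le> m + p*n" by linarith
      then have eq: "n + (m + p*n - n) = m + p*n" by simp
      have "(f^^n) ((f^^(m + p*n - n)) x) = (f^^(n + (m + p*n - n))) x" by (simp only: funpow_add o_apply)
      then show ?thesis by (simp only: eq)
    qed
    also have "\<dots> = (f^^m) ((f^^(p*n)) x)" by (simp add: funpow_add)
    also have "\<dots> = (f^^n) y" using pm e by simp
    finally have "y = (f^^(m + p*n - n)) x" using inj_fn[OF assms(1), of n] by (simp add: inj_def)
    then have "y = (f^^((m + p*n - n) mod p)) x" using md[of "m + p*n - n"] by (rule trans)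
    then show "y \<in> (\<lambda>k. (f^^k) x) ` {..<p}" using assms(3) by auto
  qed
  moreover have "finite ((\<lambda>k. (f^^k) x) ` {..<p})" by (rule finite_imageI) simp
  ultimately show ?thesis by (rule finite_subset)
qed

lemma A_chain:
  assumes "inj f" "is_open_cycle f S" "x \<in> S"
  shows "\<exists>s. chain f s \<and> s 0 = x \<and> inj s"
proof -
  have cyc: "is_cycle f S" and inf: "infinite S" and rg: "S \<subseteq> range f"
    using assms(2) unfolding open_iff by auto
  have cl: "\<forall>z. f z \<in> S \<longleftrightarrow> z \<in> S" using cyc by (simp add: is_cycle_def)
  have So: "S = orb f x" using cycle_eq[OF cyc assms(3)] .
  define s where "s = rec_nat x (\<lambda>_ z. inv f z)"
  have s0: "s 0 = x" by (simp add: s_def)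
  have sS: "s (Suc k) = inv f (s k)" for k by (simp add: s_def)
  have inS: "s k \<in> S \<and> f (s (Suc k)) = s k" for k
  proof (induction k)
    case 0
    have "x \<in> range f" using rg assms(3) by blast
    then have "f (inv f x) = x" by (rule f_inv_into_f)
    then show ?case using s0 sS assms(3) by simp
  next
    case (Suc k)
    then have "f (s (Suc k)) \<in> S" by simp
    then have a: "s (Suc k) \<in> S" using cl by simp
    have "s (Suc k) \<in> range f" using rg a by blast
    then have "f (inv f (s (Suc k))) = s (Suc k)" by (rule f_inv_into_f)
    then show ?case using a sS by simp
  qed
  then have ch: "chain f s" by (simp add: chain_def)
  have injs: "inj s"
  proof (rule inj_onI, rule ccontr)
    fix i j assume e: "s i = s j" and ne: "i \<noteq> j"
    have key: "s i = s j \<Longrightarrow> i < j \<Longrightarrow> False" for i j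
    proof -
      assume e: "s i = s j" and lt: "i < j"
      define p where "p = j - i"
      have p: "p > 0" "j = i + p" using lt by (auto simp: p_def)
      have "(f^^i) (s (i+p)) = s p" using chain_pow[OF ch] .
      moreover have "(f^^i) (s (i+0)) = s 0" using chain_pow[OF ch] .
      ultimately have "s p = x" using e p s0 by simp
      moreover have "(f^^p) (s (p+0)) = s 0" using chain_pow[OF ch] .
      ultimately have "(f^^p) x = x" using s0 by simp
      then have "finite (orb f x)" using periodic_finite[OF assms(1) _ p(1)] by simp
      then show False using inf So by simp
    qed
    show False
    proof (cases "i < j")
      case True then show False using key e by blast
    next
      case False then have "j < i" using ne by simp
      then show False using key e by (metis)
    qed
  qed
  show ?thesis using ch s0 injs by blast
qed

lemma one_dir:
  assumes "inj f" "inj g" "finite {x. f x \<noteq> g x}"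
  shows "\<exists>\<Phi>. inj_on \<Phi> {S. is_open_cycle f S} \<and> \<Phi> ` {S. is_open_cycle f S} \<subseteq> {T. is_open_cycle g T}"
proof -
  define R where "R S T \<longleftrightarrow> is_open_cycle g T \<and> (\<exists>t. chain f t \<and> chain g t \<and> t 0 \<in> S \<and> t 0 \<in> T)" for S T
  have ex: "\<exists>T. R S T" if oS: "is_open_cycle f S" for S
  proof -
    have cyc: "is_cycle f S" using oS unfolding open_iff by auto
    then obtain x where x: "x \<in> S" by (auto simp: is_cycle_def)
    obtain s where s: "chain f s" "s 0 = x" "inj s" using A_chain[OF assms(1) oS x] by blast
    have "finite (s -` {x. f x \<noteq> g x})" using finite_vimageI[OF assms(3) s(3)] .
    then obtain K where K: "s -` {x. f x \<noteq> g x} \<subseteq> {..<K}" using finite_nat_bounded by blast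
    define t where "t k = s (k + K)" for k
    have cf: "chain f t" using s(1) by (simp add: chain_def t_def)
    have cg: "chain g t"
      unfolding chain_def
    proof
      fix k
      have "f (t (Suc k)) = g (t (Suc k))" using K by (auto simp: t_def)
      then show "g (t (Suc k)) = t k" using cf by (simp add: chain_def)
    qed
    have it: "inj t"
    proof (rule injI)
      fix a b assume "t a = t b"
      then have "a + K = b + K" using s(3) by (simp add: t_def inj_eq)
      then show "a = b" by simp
    qed
    have "t 0 \<in> S" using chain_in_orb[OF s(1), of K] cycle_eq[OF cyc x] s(2) by (simp add: t_def)
    then have "R S (orb g (t 0))" using B_open[OF assms(2) cg it] cf cg orb_self[of "t 0" g]
      unfolding R_def by auto
    then show ?thesis by (rule exI)
  qed
  define \<Phi> where "\<Phi> S = (SOME T. R S T)" for S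
  have P: "R S (\<Phi> S)" if "is_open_cycle f S" for S
    unfolding \<Phi>_def using ex[OF that] by (rule someI_ex)
  have "inj_on \<Phi> {S. is_open_cycle f S}"
  proof (rule inj_onI)
    fix S S' assume S: "S \<in> {S. is_open_cycle f S}" and S': "S' \<in> {S. is_open_cycle f S}"
      and e: "\<Phi> S = \<Phi> S'"
    have RS: "R S (\<Phi> S)" using P S by simp
    have RS': "R S' (\<Phi> S)" using P S' e by simp
    obtain t where t: "chain f t" "chain g t" "t 0 \<in> S" "t 0 \<in> \<Phi> S" using RS unfolding R_def by blast
    obtain t' where t': "chain f t'" "chain g t'" "t' 0 \<in> S'" "t' 0 \<in> \<Phi> S" using RS' unfolding R_def by blast
    have gc: "is_cycle g (\<Phi> S)" using RS unfolding R_def open_iff by blast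
    have "t' 0 \<in> orb g (t 0)" using cycle_eq[OF gc t(4)] t'(4) by simp
    then obtain i j where ij: "t i = t' j" using meet[OF assms(2) t(2) t'(2)] by blast
    have c1: "is_cycle f S" using S open_iff by auto
    have c2: "is_cycle f S'" using S' open_iff by auto
    have "S = orb f (t 0)" using cycle_eq[OF c1 t(3)] .
    also have "\<dots> = orb f (t i)" using orb_eq[OF chain_in_orb[OF t(1)], of i] by simp
    also have "\<dots> = orb f (t' 0)" using orb_eq[OF chain_in_orb[OF t'(1)], of j] ij by simp
    also have "\<dots> = S'" using cycle_eq[OF c2 t'(3)] by simp
    finally show "S = S'" .
  qed
  moreover have "\<Phi> ` {S. is_open_cycle f S} \<subseteq> {T. is_open_cycle g T}"
    using P R_def by auto
  ultimately show ?thesis by (intro exI conjI)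
qed

lemma count_eq:
  assumes "inj_on \<Phi> A" "\<Phi> ` A \<subseteq> B" "inj_on \<Psi> B" "\<Psi> ` B \<subseteq> A"
  shows "(if finite A then enat (card A) else \<infinity>) = (if finite B then enat (card B) else \<infinity>)"
proof -
  have fAB: "finite A" if "finite B"
  proof -
    have "finite (\<Phi> ` A)" using assms(2) that by (rule finite_subset)
    then show ?thesis using assms(1) by (rule finite_imageD)
  qed
  have fBA: "finite B" if "finite A"
  proof -
    have "finite (\<Psi> ` B)" using assms(4) that by (rule finite_subset)
    then show ?thesis using assms(3) by (rule finite_imageD)
  qed
  show ?thesis
  proof (cases "finite A")
    case True
    then have "finite B" using fBA by simp
    then have "card A \<le> card B" "card B \<le> card A"
      using card_inj_on_le[OF assms(1,2)] card_inj_on_le[OF assms(3,4)] True by auto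
    then show ?thesis using True \<open>finite B\<close> by simp
  next
    case False then show ?thesis using fAB by auto
  qed
qed

lemma C_open_eq:
  assumes "inj f" "inj g" "finite {x. f x \<noteq> g x}"
  shows "C_open f = C_open g"
proof -
  have "{x. g x \<noteq> f x} = {x. f x \<noteq> g x}" by auto
  then have "finite {x. g x \<noteq> f x}" using assms(3) by simp
  obtain \<Phi> where \<Phi>: "inj_on \<Phi> {S. is_open_cycle f S}" "\<Phi> ` {S. is_open_cycle f S} \<subseteq> {T. is_open_cycle g T}"
    using one_dir[OF assms] by blast
  obtain \<Psi> where \<Psi>: "inj_on \<Psi> {S. is_open_cycle g S}" "\<Psi> ` {S. is_open_cycle g S} \<subseteq> {T. is_open_cycle f T}"
    using one_dir[OF assms(2,1) \<open>finite {x. g x \<noteq> f x}\<close>] by blast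
  show ?thesis unfolding C_open_def by (rule count_eq[OF \<Phi> \<Psi>])
qed

theorem mainTheorem7:
  fixes f h :: "'a::countable \<Rightarrow> 'a"
  assumes "infinite (UNIV :: 'a set)"
    and "inj f"
    and "finitary_perm h"
  shows "C_open f = C_open (f \<circ> h) \<and> C_open f = C_open (h \<circ> f)"
proof
  have bh: "bij h" and fh: "finite {x. h x \<noteq> x}" using assms(3) by (auto simp: finitary_perm_def)
  have ih: "inj h" using bh bij_is_inj by blast
  have "{x. f x \<noteq> (f \<circ> h) x} \<subseteq> {x. h x \<noteq> x}" by auto
  then have "finite {x. f x \<noteq> (f \<circ> h) x}" using fh finite_subset by blast
  then show "C_open f = C_open (f \<circ> h)" using C_open_eq assms(2) inj_compose[OF assms(2) ih] by blast
  have "{x. f x \<noteq> (h \<circ> f) x} \<subseteq> f -` {x. h x \<noteq> x}" by auto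
  moreover have "finite (f -` {x. h x \<noteq> x})" using finite_vimageI[OF fh assms(2)] .
  ultimately have "finite {x. f x \<noteq> (h \<circ> f) x}" using finite_subset by blast
  then show "C_open f = C_open (h \<circ> f)" using C_open_eq assms(2) inj_compose[OF ih assms(2)] by blast
qed

end
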